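(* Let $V_0>0$, $\alpha_1,\alpha_2>0$, $\delta_1\in\mathbb R$, and let $\gamma_1 = 1+\frac{1}{\mu}$, $\gamma_2 = 1-\frac{1}{\mu}$ for some $\mu>1$. Define \[ I \coloneqq \int_{V_0}^{0}\frac{dV}{-\alpha_1V^{\gamma_1}-\alpha_2V^{\gamma_2}+\delta_1V}. \] Then: (i) If $0\leq \delta_1<2\sqrt{\alpha_1\alpha_2}$, then \[ I\leq \frac{\mu}{\alpha_1k_1}\left(\frac{\pi}{2}-\tan^{-1}k_2\right), \] where $k_1 = \sqrt{\frac{4\alpha_1\alpha_2-\delta_1^2}{4\alpha_1^2}}$ and $k_2 = -\frac{\delta_1}{\sqrt{4\alpha_1\alpha_2-\delta_1^2}}$. (ii) If $\delta_1\geq 2\sqrt{\alpha_1\alpha_2}$ and $V_0^{1/\mu}\leq k\,\frac{\delta_1-\sqrt{\delta_1^2-4\alpha_1\alpha_2}}{2\alpha_1}$ for some $0<k<1$, then \[ I \leq \frac{\mu k}{(1-k)\sqrt{\alpha_1\alpha_2}}. \]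
   Context: $\tan^{-1}$ denotes the principal branch of the inverse tangent, with values in $(-\pi/2,\pi/2)$. *)

theory Defs
  imports "HOL-Analysis.Analysis"
begin

end

theory Submission
  imports Defs
begin
lemma red:
  fixes f :: "real \<Rightarrow> real" assumes "V0 > 0" "set_integrable lborel (einterval 0 V0) (\<lambda>x. - f x)"
  shows "interval_lebesgue_integrable lborel (ereal V0) (ereal 0) f"
        "(LBINT V=ereal V0..ereal 0. f V) = (LBINT V=ereal 0..ereal V0. - f V)"
proof -
  have "set_integrable lborel (einterval 0 V0) f"
    using assms(2) unfolding set_integrable_def using integrable_minus[of lborel "\<lambda>x. indicator (einterval 0 V0) x *\<^sub>R - f x"] by simp
  then show "interval_lebesgue_integrable lborel (ereal V0) (ereal 0) f"
    using assms(1) by (simp add: interval_lebesgue_integrable_def zero_ereal_def[symmetric])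
  show "(LBINT V=ereal V0..ereal 0. f V) = (LBINT V=ereal 0..ereal V0. - f V)"
    by (subst interval_integral_endpoints_reverse) (simp add: interval_lebesgue_integral_uminus)
qed

lemma ulims:
  fixes \<mu> V0 :: real assumes "\<mu> > 1" "V0 > 0"
  shows "((\<lambda>V. V powr (1/\<mu>)) \<longlongrightarrow> 0) (at_right 0)"
    "((\<lambda>V. V powr (1/\<mu>)) \<longlongrightarrow> V0 powr (1/\<mu>)) (at_left V0)"
    "\<And>V. V > 0 \<Longrightarrow> ((\<lambda>V. V powr (1/\<mu>)) has_real_derivative (1/\<mu>) * (V powr (1/\<mu>) / V)) (at V)"
proof -
  have "((\<lambda>V. V powr (1/\<mu>)) \<longlongrightarrow> 0 powr (1/\<mu>)) (at_right 0)"
    using assms by (intro tendsto_powr') (auto simp: eventually_at_right_less eventually_at_right_field intro!: exI[of _ 1])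
  then show "((\<lambda>V. V powr (1/\<mu>)) \<longlongrightarrow> 0) (at_right 0)" by simp
  show "((\<lambda>V. V powr (1/\<mu>)) \<longlongrightarrow> V0 powr (1/\<mu>)) (at_left V0)"
    using assms by (intro tendsto_intros) auto
  fix V :: real assume "V > 0"
  then show "((\<lambda>V. V powr (1/\<mu>)) has_real_derivative (1/\<mu>) * (V powr (1/\<mu>) / V)) (at V)"
    by (auto intro!: derivative_eq_intros simp: powr_diff)
qed

lemma fneg:
  fixes V \<alpha>1 \<alpha>2 \<delta>1 \<mu> :: real
  assumes "V > 0" "\<mu> > 1"
  shows "- (1 / (- \<alpha>1 * V powr (1 + 1/\<mu>) - \<alpha>2 * V powr (1 - 1/\<mu>) + \<delta>1 * V))
     = V powr (1/\<mu>) / (V * (\<alpha>1 * (V powr (1/\<mu>))\<^sup>2 - \<delta>1 * V powr (1/\<mu>) + \<alpha>2))"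
proof -
  define u where "u = V powr (1/\<mu>)"
  have u: "u > 0" using assms by (simp add: u_def)
  have 1: "V powr (1 + 1/\<mu>) = V * u" using assms by (simp add: u_def powr_add)
  have 2: "V powr (1 - 1/\<mu>) = V / u" using assms by (simp add: u_def powr_diff)
  have 3: "- \<alpha>1 * V powr (1 + 1/\<mu>) - \<alpha>2 * V powr (1 - 1/\<mu>) + \<delta>1 * V
     = - (V / u) * (\<alpha>1 * u\<^sup>2 - \<delta>1 * u + \<alpha>2)"
    unfolding 1 2 using u by (simp add: field_simps power2_eq_square)
  show ?thesis unfolding 3 u_def[symmetric] using u assms(1)
    by (simp add: field_simps)
qed

lemma fcont:
  fixes V \<alpha>1 \<alpha>2 \<delta>1 \<mu> :: real
  assumes "V > 0" "\<mu> > 1" "\<alpha>1 * (V powr (1/\<mu>))\<^sup>2 - \<delta>1 * V powr (1/\<mu>) + \<alpha>2 \<noteq> 0"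
  shows "isCont (\<lambda>V. - (1 / (- \<alpha>1 * V powr (1 + 1/\<mu>) - \<alpha>2 * V powr (1 - 1/\<mu>) + \<delta>1 * V))) V"
proof -
  have "- \<alpha>1 * V powr (1 + 1/\<mu>) - \<alpha>2 * V powr (1 - 1/\<mu>) + \<delta>1 * V \<noteq> 0"
  proof
    assume D: "- \<alpha>1 * V powr (1 + 1/\<mu>) - \<alpha>2 * V powr (1 - 1/\<mu>) + \<delta>1 * V = 0"
    have "V powr (1/\<mu>) / (V * (\<alpha>1 * (V powr (1/\<mu>))\<^sup>2 - \<delta>1 * V powr (1/\<mu>) + \<alpha>2)) = 0"
      using fneg[OF assms(1,2), of \<alpha>1 \<alpha>2 \<delta>1] D by simp
    then show False using assms by simp
  qed
  then show ?thesis using assms by (auto intro!: continuous_intros)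
qed

lemma FTC_both:
  fixes f F :: "real \<Rightarrow> real" and a b :: ereal
  assumes "a < b"
  assumes F: "\<And>x. a < ereal x \<Longrightarrow> ereal x < b \<Longrightarrow> DERIV F x :> f x"
  assumes f: "\<And>x. a < ereal x \<Longrightarrow> ereal x < b \<Longrightarrow> isCont f x"
  assumes f_nonneg: "AE x in lborel. a < ereal x \<longrightarrow> ereal x < b \<longrightarrow> 0 \<le> f x"
  assumes A: "((F \<circ> real_of_ereal) \<longlongrightarrow> A) (at_right a)"
  assumes B: "((F \<circ> real_of_ereal) \<longlongrightarrow> B) (at_left b)"
  shows "set_integrable lborel (einterval a b) f \<and> (LBINT x=a..b. f x) = B - A"
  using interval_integral_FTC_nonneg[OF assms] by blast

lemma case1:
  fixes V0 \<alpha>1 \<alpha>2 \<delta>1 \<mu> :: real and f :: "real \<Rightarrow> real"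
  assumes "V0 > 0" and "\<alpha>1 > 0" and "\<alpha>2 > 0" and "\<mu> > 1" "0 \<le> \<delta>1" "\<delta>1 < 2 * sqrt (\<alpha>1 * \<alpha>2)"
  assumes f_def: "f = (\<lambda>V::real. 1 / (- \<alpha>1 * V powr (1 + 1/\<mu>) - \<alpha>2 * V powr (1 - 1/\<mu>) + \<delta>1 * V))"
  shows "set_integrable lborel (einterval 0 V0) (\<lambda>x. - f x) \<and>
     (LBINT V=ereal 0..ereal V0. - f V) \<le> \<mu> / (\<alpha>1 * sqrt ((4 * \<alpha>1 * \<alpha>2 - \<delta>1\<^sup>2) / (4 * \<alpha>1\<^sup>2))) *
        (pi / 2 - arctan (- \<delta>1 / sqrt (4 * \<alpha>1 * \<alpha>2 - \<delta>1\<^sup>2)))"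
proof -
  have "\<delta>1\<^sup>2 < (2 * sqrt (\<alpha>1 * \<alpha>2))\<^sup>2"
    using assms(5,6) by (intro power_strict_mono) auto
  also have "\<dots> = 4 * \<alpha>1 * \<alpha>2" using assms(2,3) by (simp add: power_mult_distrib)
  finally have dlt: "\<delta>1\<^sup>2 < 4 * \<alpha>1 * \<alpha>2" .
  define s where "s = sqrt (4 * \<alpha>1 * \<alpha>2 - \<delta>1\<^sup>2)"
  have s: "s > 0" "s\<^sup>2 = 4 * \<alpha>1 * \<alpha>2 - \<delta>1\<^sup>2" using dlt by (auto simp: s_def)
  define k1 where "k1 = sqrt ((4 * \<alpha>1 * \<alpha>2 - \<delta>1\<^sup>2) / (4 * \<alpha>1\<^sup>2))"
  have k1: "k1 = s / (2 * \<alpha>1)"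
  proof -
    have "(4 * \<alpha>1 * \<alpha>2 - \<delta>1\<^sup>2) / (4 * \<alpha>1\<^sup>2) = (s / (2 * \<alpha>1))\<^sup>2"
      using s assms(2) by (simp add: power_divide power_mult_distrib)
    then show ?thesis unfolding k1_def using s assms(2) by simp
  qed
  have k1pos: "k1 > 0" using k1 s assms(2) by simp
  define c where "c = \<delta>1 / (2 * \<alpha>1)"
  have qeq: "\<alpha>1 * u\<^sup>2 - \<delta>1 * u + \<alpha>2 = \<alpha>1 * ((u - c)\<^sup>2 + k1\<^sup>2)" for u
    using s assms(2) unfolding k1 c_def apply (simp add: field_simps power2_eq_square)
    by (metis distrib_left)
  have qpos: "\<alpha>1 * u\<^sup>2 - \<delta>1 * u + \<alpha>2 > 0" for u
    unfolding qeq using assms(2) k1pos by (intro mult_pos_pos) (auto intro: add_nonneg_pos)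
  define F where "F = (\<lambda>V. \<mu> / (\<alpha>1 * k1) * arctan ((V powr (1/\<mu>) - c) / k1))"
  have FTC': "set_integrable lborel (einterval (ereal 0) (ereal V0)) (\<lambda>x. - f x) \<and>
    (LBINT x=ereal 0..ereal V0. - f x) = F V0 - \<mu> / (\<alpha>1 * k1) * arctan ((0 - c) / k1)"
  proof (rule FTC_both)
    show "ereal 0 < ereal V0" using assms by simp
  next
    fix x assume "ereal 0 < ereal x" "ereal x < ereal V0"
    then have x: "x > 0" by simp
    let ?u = "x powr (1/\<mu>)"
    have d1: "((\<lambda>x. (x powr (1/\<mu>) - c) / k1) has_real_derivative (1/\<mu> * (?u / x)) / k1) (at x)"
      using DERIV_cdivide[OF DERIV_diff[OF ulims(3)[OF assms(4,1) x] DERIV_const[of c]], of k1] by simp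
    have d2: "(F has_real_derivative \<mu> / (\<alpha>1 * k1) * (inverse (1 + ((?u - c) / k1)\<^sup>2) * ((1/\<mu> * (?u / x)) / k1))) (at x)"
      unfolding F_def by (intro DERIV_cmult DERIV_chain2[OF DERIV_arctan d1])
    have "\<mu> / (\<alpha>1 * k1) * (inverse (1 + ((?u - c) / k1)\<^sup>2) * ((1/\<mu> * (?u / x)) / k1))
        = ?u / (x * (\<alpha>1 * ((?u - c)\<^sup>2 + k1\<^sup>2)))"
    proof -
      define w where "w = (?u - c)\<^sup>2 + k1\<^sup>2"
      have w: "w > 0" unfolding w_def using k1pos by (auto intro: add_nonneg_pos)
      have "inverse (1 + ((?u - c) / k1)\<^sup>2) = k1\<^sup>2 / w"
        unfolding w_def using k1pos by (simp add: field_simps power_divide)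
      then show ?thesis unfolding w_def[symmetric] using k1pos assms(2,4) x w
        by (simp add: field_simps power2_eq_square)
    qed
    also have "\<dots> = - f x" unfolding f_def fneg[OF x assms(4)] qeq ..
    finally show "(F has_real_derivative - f x) (at x)" using d2 by simp
    show "isCont (\<lambda>x. - f x) x" unfolding f_def
      using fcont[OF x assms(4)] qpos[of ?u] by simp
  next
    show "AE x in lborel. ereal 0 < ereal x \<longrightarrow> ereal x < ereal V0 \<longrightarrow> 0 \<le> - f x"
    proof (intro AE_I2 impI)
      fix x assume "ereal 0 < ereal x"
      then have x: "x > 0" by simp
      show "0 \<le> - f x" unfolding f_def fneg[OF x assms(4)] using qpos[of "x powr (1/\<mu>)"] x by simp
    qed
  next
    show "((F \<circ> real_of_ereal) \<longlongrightarrow> \<mu> / (\<alpha>1 * k1) * arctan ((0 - c) / k1)) (at_right (ereal 0))"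
      unfolding ereal_tendsto_simps1 F_def using ulims(1)[OF assms(4,1)] k1pos
      by (intro tendsto_intros) auto
    show "((F \<circ> real_of_ereal) \<longlongrightarrow> F V0) (at_left (ereal V0))"
      unfolding ereal_tendsto_simps1 F_def using ulims(2)[OF assms(4,1)] k1pos assms(1)
      by (intro tendsto_intros) auto
  qed
  note FTC = conjunct1[OF FTC'] conjunct2[OF FTC']
  have k2: "(0 - c) / k1 = - \<delta>1 / sqrt (4 * \<alpha>1 * \<alpha>2 - \<delta>1\<^sup>2)"
    unfolding k1 c_def s_def[symmetric] using assms(2) s by (simp add: field_simps)
  have "F V0 \<le> \<mu> / (\<alpha>1 * k1) * (pi/2)"
    unfolding F_def using assms(2,4) k1pos arctan_ubound
    by (intro mult_left_mono) (auto simp: less_imp_le)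
  then have "(LBINT x=ereal 0..ereal V0. - f x) \<le> \<mu> / (\<alpha>1 * k1) * (pi / 2 - arctan (- \<delta>1 / sqrt (4 * \<alpha>1 * \<alpha>2 - \<delta>1\<^sup>2)))"
    unfolding FTC(2) k2[symmetric] by (simp add: right_diff_distrib)
  then show ?thesis using FTC(1) unfolding k1_def by (simp add: zero_ereal_def)
qed

lemma case2:
  fixes V0 \<alpha>1 \<alpha>2 \<delta>1 \<mu> k :: real and f :: "real \<Rightarrow> real"
  assumes "V0 > 0" and "\<alpha>1 > 0" and "\<alpha>2 > 0" and "\<mu> > 1" "0 < k" "k < 1" "\<delta>1 \<ge> 2 * sqrt (\<alpha>1 * \<alpha>2)"
    "V0 powr (1 / \<mu>) \<le> k * ((\<delta>1 - sqrt (\<delta>1\<^sup>2 - 4 * \<alpha>1 * \<alpha>2)) / (2 * \<alpha>1))"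
  assumes f_def: "f = (\<lambda>V::real. 1 / (- \<alpha>1 * V powr (1 + 1/\<mu>) - \<alpha>2 * V powr (1 - 1/\<mu>) + \<delta>1 * V))"
  shows "set_integrable lborel (einterval 0 V0) (\<lambda>x. - f x) \<and>
     (LBINT V=ereal 0..ereal V0. - f V) \<le> \<mu> * k / ((1 - k) * sqrt (\<alpha>1 * \<alpha>2))"
proof -
  have sq: "sqrt (\<alpha>1 * \<alpha>2) > 0" using assms(2,3) by simp
  have d0: "\<delta>1 > 0" using assms(7) sq by linarith
  have "(2 * sqrt (\<alpha>1 * \<alpha>2))\<^sup>2 \<le> \<delta>1\<^sup>2"
    using assms(7) sq by (intro power_mono) auto
  also have "(2 * sqrt (\<alpha>1 * \<alpha>2))\<^sup>2 = 4 * \<alpha>1 * \<alpha>2" using assms(2,3) by (simp add: power_mult_distrib)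
  finally have Dnn: "\<delta>1\<^sup>2 - 4 * \<alpha>1 * \<alpha>2 \<ge> 0" by simp
  define t where "t = sqrt (\<delta>1\<^sup>2 - 4 * \<alpha>1 * \<alpha>2)"
  have t: "t \<ge> 0" "t\<^sup>2 = \<delta>1\<^sup>2 - 4 * \<alpha>1 * \<alpha>2" using Dnn by (auto simp: t_def)
  have "t\<^sup>2 < \<delta>1\<^sup>2" using t assms(2,3) by simp
  then have tlt: "t < \<delta>1" using t(1) d0 by (simp add: power_less_imp_less_base)
  define r1 where "r1 = (\<delta>1 - t) / (2 * \<alpha>1)"
  define r2 where "r2 = (\<delta>1 + t) / (2 * \<alpha>1)"
  have r1: "r1 > 0" using tlt assms(2) by (simp add: r1_def)
  have r12: "r1 \<le> r2" using t(1) assms(2) by (simp add: r1_def r2_def divide_right_mono)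
  have r2: "r2 > 0" using r1 r12 by linarith
  have qfac: "\<alpha>1 * u\<^sup>2 - \<delta>1 * u + \<alpha>2 = \<alpha>1 * ((r1 - u) * (r2 - u))" for u
  proof -
    have "\<alpha>1 * ((r1 - u) * (r2 - u)) = \<alpha>1 * u\<^sup>2 - \<delta>1 * u + (\<delta>1\<^sup>2 - t\<^sup>2) / (4 * \<alpha>1)"
      unfolding r1_def r2_def using assms(2) by (simp add: field_simps power2_eq_square)
    also have "(\<delta>1\<^sup>2 - t\<^sup>2) / (4 * \<alpha>1) = \<alpha>2" unfolding t(2) using assms(2) by simp
    finally show ?thesis by simp
  qed
  have a1r2: "\<alpha>1 * r2 \<ge> sqrt (\<alpha>1 * \<alpha>2)"
    unfolding r2_def using assms(2,7) t(1) by simp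
  define U0 where "U0 = V0 powr (1/\<mu>)"
  have U0: "U0 > 0" "U0 \<le> k * r1" using assms(1,8) by (auto simp: U0_def r1_def t_def)
  have "k * r1 < r1" using assms(6) r1 by simp
  then have U0r1: "U0 < r1" using U0 by linarith
  have ult: "x powr (1/\<mu>) < r1" if "0 < x" "x < V0" for x
  proof -
    have "x powr (1/\<mu>) < U0" unfolding U0_def using that assms(4) by (intro powr_less_mono2) auto
    then show ?thesis using U0r1 by simp
  qed
  define C where "C = \<mu> * r1 / (\<alpha>1 * r2)"
  have Cpos: "C > 0" using assms(2,4) r1 r2 by (simp add: C_def)
  define H where "H = (\<lambda>x. C * inverse (r1 - x powr (1/\<mu>)))"
  define h where "h = (\<lambda>x. C * ((1/\<mu> * (x powr (1/\<mu>) / x)) / (r1 - x powr (1/\<mu>))\<^sup>2))"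
  have FTC': "set_integrable lborel (einterval (ereal 0) (ereal V0)) h \<and>
    (LBINT x=ereal 0..ereal V0. h x) = H V0 - C * inverse (r1 - 0)"
  proof (rule FTC_both)
    show "ereal 0 < ereal V0" using assms by simp
  next
    fix x assume "ereal 0 < ereal x" "ereal x < ereal V0"
    then have x: "x > 0" "x < V0" by auto
    have ne: "r1 - x powr (1/\<mu>) \<noteq> 0" using ult[OF x] by simp
    have d1: "((\<lambda>x. r1 - x powr (1/\<mu>)) has_real_derivative 0 - 1/\<mu> * (x powr (1/\<mu>) / x)) (at x)"
      by (intro DERIV_diff DERIV_const ulims(3)[OF assms(4,1) x(1)])
    have d2: "(H has_real_derivative C * (- ((0 - 1/\<mu> * (x powr (1/\<mu>) / x)) * inverse ((r1 - x powr (1/\<mu>)) ^ Suc (Suc 0))))) (at x)"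
      unfolding H_def by (intro DERIV_cmult DERIV_inverse_fun[OF d1 ne])
    then show "(H has_real_derivative h x) (at x)" unfolding h_def by (simp add: divide_inverse power2_eq_square)
    show "isCont h x" unfolding h_def using ne x assms(4) by (auto intro!: continuous_intros)
  next
    show "AE x in lborel. ereal 0 < ereal x \<longrightarrow> ereal x < ereal V0 \<longrightarrow> 0 \<le> h x"
      using Cpos assms(4) by (intro AE_I2) (auto simp: h_def)
  next
    show "((H \<circ> real_of_ereal) \<longlongrightarrow> C * inverse (r1 - 0)) (at_right (ereal 0))"
      unfolding ereal_tendsto_simps1 H_def using ulims(1)[OF assms(4,1)] r1
      by (intro tendsto_intros) auto
    show "((H \<circ> real_of_ereal) \<longlongrightarrow> H V0) (at_left (ereal V0))"
      unfolding ereal_tendsto_simps1 H_def using ulims(2)[OF assms(4,1)] U0r1 assms(1)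
      by (intro tendsto_intros) (auto simp: U0_def)
  qed
  have hint: "set_integrable lborel (einterval 0 V0) h" using FTC' by (simp add: zero_ereal_def)
  have hval: "(LBINT x=ereal 0..ereal V0. h x) = H V0 - C / r1" using FTC' by (simp add: divide_inverse)
  have bnd: "0 \<le> - f x \<and> - f x \<le> h x" if "x \<in> einterval 0 V0" for x
  proof -
    from that have x: "0 < x" "x < V0" by (auto simp: einterval_def)
    define u where "u = x powr (1/\<mu>)"
    have u: "0 < u" "u < r1" using ult[OF x] x by (auto simp: u_def)
    have fx: "- f x = u / (x * (\<alpha>1 * ((r1 - u) * (r2 - u))))"
      unfolding f_def fneg[OF x(1) assms(4)] qfac u_def ..
    have hx: "h x = u / (x * (\<alpha>1 * (r2 / r1) * (r1 - u)\<^sup>2))"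
      unfolding h_def C_def u_def[symmetric] using assms(2,4) x r1 r2 u
      by (simp add: field_simps)
    have key: "(r2 / r1) * (r1 - u)\<^sup>2 \<le> (r1 - u) * (r2 - u)"
    proof -
      have "r2 * (r1 - u) \<le> r1 * (r2 - u)" using u r12 by (simp add: algebra_simps mult_right_mono)
      then have "r2 / r1 * (r1 - u) \<le> r2 - u" using r1 by (simp add: field_simps)
      then have "r2 / r1 * (r1 - u) * (r1 - u) \<le> (r2 - u) * (r1 - u)"
        using u by (intro mult_right_mono) auto
      moreover have "(r2/r1)*(r1-u)\<^sup>2 = r2/r1*(r1-u)*(r1-u)" by (simp add: power2_eq_square)
      moreover have "(r1-u)*(r2-u) = (r2-u)*(r1-u)" by simp
      ultimately show ?thesis by linarith
    qed
    have p1: "0 < x * (\<alpha>1 * (r2 / r1) * (r1 - u)\<^sup>2)" using x u r1 r2 assms(2) by simp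
    have "x * (\<alpha>1 * (r2 / r1) * (r1 - u)\<^sup>2) \<le> x * (\<alpha>1 * ((r1 - u) * (r2 - u)))"
    proof -
      have "x * (\<alpha>1 * ((r2 / r1) * (r1 - u)\<^sup>2)) \<le> x * (\<alpha>1 * ((r1 - u) * (r2 - u)))"
        using key x assms(2) by (intro mult_left_mono) auto
      then show ?thesis by (simp only: mult.assoc)
    qed
    note le1 = this
    have "u / (x * (\<alpha>1 * ((r1 - u) * (r2 - u)))) \<le> u / (x * (\<alpha>1 * (r2 / r1) * (r1 - u)\<^sup>2))"
    proof -
      have p2: "0 < x * (\<alpha>1 * ((r1 - u) * (r2 - u)))" using p1 le1 by linarith
      show ?thesis using divide_left_mono[OF le1 _ mult_pos_pos[OF p2 p1], of u] u by simp
    qed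
    moreover have "0 \<le> u / (x * (\<alpha>1 * ((r1 - u) * (r2 - u))))" using u x r12 assms(2) by simp
    ultimately show ?thesis unfolding fx hx by simp
  qed
  have meas: "set_borel_measurable lborel (einterval 0 V0) (\<lambda>x. - f x)"
  proof -
    have "continuous_on (einterval 0 V0) (\<lambda>x. - f x)"
    proof (intro continuous_at_imp_continuous_on ballI)
      fix x assume "x \<in> einterval 0 V0"
      then have x: "0 < x" "x < V0" by (auto simp: einterval_def)
      have "\<alpha>1 * (x powr (1/\<mu>))\<^sup>2 - \<delta>1 * x powr (1/\<mu>) + \<alpha>2 > 0"
        unfolding qfac using ult[OF x] r12 assms(2) by simp
      then show "isCont (\<lambda>x. - f x) x" unfolding f_def using fcont[OF x(1) assms(4)] by simp
    qed
    then show ?thesis unfolding set_borel_measurable_def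
      by (auto simp del: real_scaleR_def intro!: borel_measurable_continuous_on_indicator
          dest: continuous_on_minus)
  qed
  have fint: "set_integrable lborel (einterval 0 V0) (\<lambda>x. - f x)"
  proof (rule set_integrable_bound[OF hint meas], intro AE_I2 impI)
    fix x assume "x \<in> einterval 0 V0"
    then show "norm (- f x) \<le> norm (h x)" using bnd[of x] by auto
  qed
  have "(LBINT V=ereal 0..ereal V0. - f V) \<le> (LBINT x=ereal 0..ereal V0. h x)"
    using assms(1) fint hint bnd
    by (simp add: interval_lebesgue_integral_def zero_ereal_def[symmetric] set_integral_mono)
  also have "\<dots> = H V0 - C / r1" by (rule hval)
  also have "\<dots> = \<mu> / (\<alpha>1 * r2) * (U0 / (r1 - U0))"
    unfolding H_def C_def U0_def[symmetric] using r1 r2 U0r1 assms(2,4)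
    by (simp add: field_simps)
  also have "\<dots> \<le> \<mu> / sqrt (\<alpha>1 * \<alpha>2) * (k / (1 - k))"
  proof (intro mult_mono)
    show "\<mu> / (\<alpha>1 * r2) \<le> \<mu> / sqrt (\<alpha>1 * \<alpha>2)"
      using a1r2 sq assms(2,4) r2 by (intro divide_left_mono) auto
    show "U0 / (r1 - U0) \<le> k / (1 - k)"
      using U0 U0r1 assms(5,6) by (simp add: divide_simps algebra_simps)
    show "0 \<le> \<mu> / sqrt (\<alpha>1 * \<alpha>2)" using assms(4) sq by simp
    show "0 \<le> U0 / (r1 - U0)" using U0 U0r1 by simp
  qed
  also have "\<dots> = \<mu> * k / ((1 - k) * sqrt (\<alpha>1 * \<alpha>2))" by simp
  finally show ?thesis using fint by simp
qed

theorem lemma2: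
  fixes V0 \<alpha>1 \<alpha>2 \<delta>1 \<mu> :: real
  assumes "V0 > 0" and "\<alpha>1 > 0" and "\<alpha>2 > 0" and "\<mu> > 1"
  defines "\<gamma>1 \<equiv> 1 + 1 / \<mu>" and "\<gamma>2 \<equiv> 1 - 1 / \<mu>"
  defines "f \<equiv> (\<lambda>V::real. 1 / (- \<alpha>1 * V powr \<gamma>1 - \<alpha>2 * V powr \<gamma>2 + \<delta>1 * V))"
  defines "I \<equiv> (LBINT V=ereal V0..ereal 0. f V)"
  shows "(0 \<le> \<delta>1 \<and> \<delta>1 < 2 * sqrt (\<alpha>1 * \<alpha>2) \<longrightarrow>
           (let k1 = sqrt ((4 * \<alpha>1 * \<alpha>2 - \<delta>1\<^sup>2) / (4 * \<alpha>1\<^sup>2));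
                k2 = - \<delta>1 / sqrt (4 * \<alpha>1 * \<alpha>2 - \<delta>1\<^sup>2)
            in interval_lebesgue_integrable lborel (ereal V0) (ereal 0) f \<and>
               I \<le> \<mu> / (\<alpha>1 * k1) * (pi / 2 - arctan k2)))
       \<and> (\<forall>k::real. 0 < k \<and> k < 1 \<and> \<delta>1 \<ge> 2 * sqrt (\<alpha>1 * \<alpha>2) \<and>
              V0 powr (1 / \<mu>) \<le> k * ((\<delta>1 - sqrt (\<delta>1\<^sup>2 - 4 * \<alpha>1 * \<alpha>2)) / (2 * \<alpha>1)) \<longrightarrow>
            interval_lebesgue_integrable lborel (ereal V0) (ereal 0) f \<and>
            I \<le> \<mu> * k / ((1 - k) * sqrt (\<alpha>1 * \<alpha>2)))"
proof -
  have fd: "f = (\<lambda>V::real. 1 / (- \<alpha>1 * V powr (1 + 1/\<mu>) - \<alpha>2 * V powr (1 - 1/\<mu>) + \<delta>1 * V))"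
    unfolding f_def \<gamma>1_def \<gamma>2_def ..
  show ?thesis
  proof (intro conjI impI allI)
    assume h: "0 \<le> \<delta>1 \<and> \<delta>1 < 2 * sqrt (\<alpha>1 * \<alpha>2)"
    have c: "set_integrable lborel (einterval 0 V0) (\<lambda>x. - f x) \<and>
     (LBINT V=ereal 0..ereal V0. - f V) \<le> \<mu> / (\<alpha>1 * sqrt ((4 * \<alpha>1 * \<alpha>2 - \<delta>1\<^sup>2) / (4 * \<alpha>1\<^sup>2))) *
        (pi / 2 - arctan (- \<delta>1 / sqrt (4 * \<alpha>1 * \<alpha>2 - \<delta>1\<^sup>2)))"
      using h by (intro case1[OF assms(1-4) _ _ fd]) auto
    show "let k1 = sqrt ((4 * \<alpha>1 * \<alpha>2 - \<delta>1\<^sup>2) / (4 * \<alpha>1\<^sup>2));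
                k2 = - \<delta>1 / sqrt (4 * \<alpha>1 * \<alpha>2 - \<delta>1\<^sup>2)
            in interval_lebesgue_integrable lborel (ereal V0) (ereal 0) f \<and>
               I \<le> \<mu> / (\<alpha>1 * k1) * (pi / 2 - arctan k2)"
      unfolding Let_def I_def red(2)[OF assms(1) conjunct1[OF c]]
      using red(1)[OF assms(1) conjunct1[OF c]] conjunct2[OF c] by simp
  next
    fix k assume h: "0 < k \<and> k < 1 \<and> \<delta>1 \<ge> 2 * sqrt (\<alpha>1 * \<alpha>2) \<and>
              V0 powr (1 / \<mu>) \<le> k * ((\<delta>1 - sqrt (\<delta>1\<^sup>2 - 4 * \<alpha>1 * \<alpha>2)) / (2 * \<alpha>1))"
    have c: "set_integrable lborel (einterval 0 V0) (\<lambda>x. - f x) \<and>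
     (LBINT V=ereal 0..ereal V0. - f V) \<le> \<mu> * k / ((1 - k) * sqrt (\<alpha>1 * \<alpha>2))"
      using h by (intro case2[OF assms(1-4) _ _ _ _ fd]) auto
    show "interval_lebesgue_integrable lborel (ereal V0) (ereal 0) f"
      using red(1)[OF assms(1) conjunct1[OF c]] .
    show "I \<le> \<mu> * k / ((1 - k) * sqrt (\<alpha>1 * \<alpha>2))"
      unfolding I_def red(2)[OF assms(1) conjunct1[OF c]] using conjunct2[OF c] .
  qed
qed

end
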